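(* Let $s>0$ be real, and let $n\ge2$ and $r\ge1$ be integers. Let $N=\min(n+r,\,2n-1)$. Then there exist a finite graph $G$ that is a vertex-disjoint union of $r$ cycles (so $\mathrm{FvsNum}(G)=r$) and $n$ agents with additive valuations such that no $s$-separated allocation $(A_1,\dots,A_n)$ satisfies $v_i(A_i)\ge\mathrm{MMS}_i^{N-1,s}$ for every $i\in[n]$. The same holds if zero-valued tree components are added to $G$.
   Context: Cake model: the cake is a finite undirected graph $G$ whose edges are segments of positive length; points of $G$ are its vertices and the points on its edges. A piece of cake is a finite union of intervals contained in edges, together possibly with some vertices. A piece $X$ is connected if any two points of $X$ can be joined by a path in $G$ that stays inside $X$. An additive valuation is a nonatomic measure on the cake. Distances: $\mathrm{Dist}^G(x,y)$ is the length of a shortest path along the edges, and is $\infty$ if $x$ and $y$ lie in different components. For sets, $\mathrm{Dist}^G(X,Y)=\inf_{x\in X,y\in Y}\mathrm{Dist}^G(x,y)$. Separation: a $k$-partition is $s$-separated if it consists of $k$ pairwise disjoint connected pieces $P_1,\dots,P_k$ with $\mathrm{Dist}^G(P_i,P_j)\ge s$ for $i\ne j$. An $s$-separated allocation is a vector of connected pieces satisfying the same condition. Maximin share: $\mathrm{MMS}_i^{k,s}=\sup\min_{j\in[k]}v_i(P_j)$, where the supremum ranges over $s$-separated $k$-partitions. $\mathrm{FvsNum}(G)$ is the minimum number of vertices whose removal from $G$ leaves an acyclic graph. *)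

theory Defs
  imports "HOL-Analysis.Analysis"
begin

record ('v,'e) cgraph =
  verts :: "'v set"
  edges :: "'e set"
  src   :: "'e \<Rightarrow> 'v"
  tgt   :: "'e \<Rightarrow> 'v"
  elen  :: "'e \<Rightarrow> real"

definition wf_cgraph :: "('v,'e) cgraph \<Rightarrow> bool" where
  "wf_cgraph G \<longleftrightarrow> finite (verts G) \<and> finite (edges G) \<and>
     (\<forall>e\<in>edges G. src G e \<in> verts G \<and> tgt G e \<in> verts G \<and> elen G e > 0)"

text \<open>Points of the cake: vertices, and interior points of edges
  (Pt e t with 0 < t < elen e; edge e is parametrised from src e to tgt e).\<close>
datatype ('v,'e) cpoint = Vtx 'v | Pt 'e real

definition cake_points :: "('v,'e) cgraph \<Rightarrow> ('v,'e) cpoint set" where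
  "cake_points G = Vtx ` verts G \<union> {Pt e t | e t. e \<in> edges G \<and> 0 < t \<and> t < elen G e}"

definition loc :: "('v,'e) cgraph \<Rightarrow> 'e \<Rightarrow> real \<Rightarrow> ('v,'e) cpoint" where
  "loc G e t = (if t \<le> 0 then Vtx (src G e) else if elen G e \<le> t then Vtx (tgt G e) else Pt e t)"

definition valid_step :: "('v,'e) cgraph \<Rightarrow> 'e \<times> real \<times> real \<Rightarrow> bool" where
  "valid_step G w = (case w of (e,a,b) \<Rightarrow>
     e \<in> edges G \<and> 0 \<le> a \<and> a \<le> elen G e \<and> 0 \<le> b \<and> b \<le> elen G e)"

definition step_start :: "('v,'e) cgraph \<Rightarrow> 'e \<times> real \<times> real \<Rightarrow> ('v,'e) cpoint" where
  "step_start G w = (case w of (e,a,b) \<Rightarrow> loc G e a)"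

definition step_end :: "('v,'e) cgraph \<Rightarrow> 'e \<times> real \<times> real \<Rightarrow> ('v,'e) cpoint" where
  "step_end G w = (case w of (e,a,b) \<Rightarrow> loc G e b)"

definition step_points :: "('v,'e) cgraph \<Rightarrow> 'e \<times> real \<times> real \<Rightarrow> ('v,'e) cpoint set" where
  "step_points G w = (case w of (e,a,b) \<Rightarrow> loc G e ` {min a b .. max a b})"

definition step_len :: "'e \<times> real \<times> real \<Rightarrow> real" where
  "step_len w = (case w of (e,a,b) \<Rightarrow> \<bar>b - a\<bar>)"

definition is_walk :: "('v,'e) cgraph \<Rightarrow> ('v,'e) cpoint \<Rightarrow> ('v,'e) cpoint
    \<Rightarrow> ('e \<times> real \<times> real) list \<Rightarrow> bool" where
  "is_walk G x y ws \<longleftrightarrow>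
     (ws = [] \<and> x = y \<and> x \<in> cake_points G) \<or>
     (ws \<noteq> [] \<and> (\<forall>w\<in>set ws. valid_step G w) \<and>
      step_start G (hd ws) = x \<and> step_end G (last ws) = y \<and>
      (\<forall>i. Suc i < length ws \<longrightarrow> step_end G (ws ! i) = step_start G (ws ! Suc i)))"

definition walk_points :: "('v,'e) cgraph \<Rightarrow> ('v,'e) cpoint
    \<Rightarrow> ('e \<times> real \<times> real) list \<Rightarrow> ('v,'e) cpoint set" where
  "walk_points G x ws = (if ws = [] then {x} else \<Union> (step_points G ` set ws))"

definition walk_len :: "('e \<times> real \<times> real) list \<Rightarrow> real" where
  "walk_len ws = sum_list (map step_len ws)"

text \<open>Shortest-path distance; infinite (Inf of the empty set) across components.\<close>
definition Dist :: "('v,'e) cgraph \<Rightarrow> ('v,'e) cpoint \<Rightarrow> ('v,'e) cpoint \<Rightarrow> ereal" where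
  "Dist G x y = (INF ws \<in> {ws. is_walk G x y ws}. ereal (walk_len ws))"

definition SetDist :: "('v,'e) cgraph \<Rightarrow> ('v,'e) cpoint set \<Rightarrow> ('v,'e) cpoint set \<Rightarrow> ereal" where
  "SetDist G X Y = (INF x \<in> X. INF y \<in> Y. Dist G x y)"

definition is_piece :: "('v,'e) cgraph \<Rightarrow> ('v,'e) cpoint set \<Rightarrow> bool" where
  "is_piece G X \<longleftrightarrow> X \<subseteq> cake_points G \<and>
     (\<forall>e\<in>edges G. \<exists>I. finite I \<and> (\<forall>J\<in>I. is_interval (J :: real set)) \<and>
        {t. 0 < t \<and> t < elen G e \<and> Pt e t \<in> X} = \<Union> I)"

definition connected_piece :: "('v,'e) cgraph \<Rightarrow> ('v,'e) cpoint set \<Rightarrow> bool" where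
  "connected_piece G X \<longleftrightarrow> is_piece G X \<and>
     (\<forall>x\<in>X. \<forall>y\<in>X. \<exists>ws. is_walk G x y ws \<and> walk_points G x ws \<subseteq> X)"

text \<open>A measure on the cake is given by its restriction to each (open) edge,
  a finite nonatomic Borel measure on the parameter line; vertices carry no mass.\<close>
definition valuation :: "('v,'e) cgraph \<Rightarrow> ('e \<Rightarrow> real measure) \<Rightarrow> bool" where
  "valuation G \<mu> \<longleftrightarrow> (\<forall>e\<in>edges G. sets (\<mu> e) = sets borel \<and> finite_measure (\<mu> e) \<and>
      (\<forall>t. emeasure (\<mu> e) {t} = 0))"

definition val :: "('v,'e) cgraph \<Rightarrow> ('e \<Rightarrow> real measure) \<Rightarrow> ('v,'e) cpoint set \<Rightarrow> real" where
  "val G \<mu> X = (\<Sum>e\<in>edges G. measure (\<mu> e) {t. 0 < t \<and> t < elen G e \<and> Pt e t \<in> X})"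

definition sep_family :: "('v,'e) cgraph \<Rightarrow> real \<Rightarrow> nat \<Rightarrow> (nat \<Rightarrow> ('v,'e) cpoint set) \<Rightarrow> bool" where
  "sep_family G s k P \<longleftrightarrow> (\<forall>j<k. connected_piece G (P j)) \<and>
     (\<forall>i<k. \<forall>j<k. i \<noteq> j \<longrightarrow> P i \<inter> P j = {} \<and> ereal s \<le> SetDist G (P i) (P j))"

definition MMS :: "('v,'e) cgraph \<Rightarrow> ('e \<Rightarrow> real measure) \<Rightarrow> nat \<Rightarrow> real \<Rightarrow> real" where
  "MMS G \<mu> k s = Sup {Min ((\<lambda>j. val G \<mu> (P j)) ` {..<k}) | P. sep_family G s k P}"

definition is_cycle :: "('v,'e) cgraph \<Rightarrow> 'e list \<Rightarrow> 'v list \<Rightarrow> bool" where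
  "is_cycle G es vs \<longleftrightarrow> es \<noteq> [] \<and> length es = length vs \<and> distinct es \<and> distinct vs \<and>
     set es \<subseteq> edges G \<and> set vs \<subseteq> verts G \<and>
     (\<forall>j<length es. {src G (es ! j), tgt G (es ! j)} = {vs ! j, vs ! ((j + 1) mod length vs)})"

definition acyclic_g :: "('v,'e) cgraph \<Rightarrow> bool" where
  "acyclic_g G \<longleftrightarrow> \<not> (\<exists>es vs. is_cycle G es vs)"

definition delete_verts :: "('v,'e) cgraph \<Rightarrow> 'v set \<Rightarrow> ('v,'e) cgraph" where
  "delete_verts G S = G\<lparr>verts := verts G - S,
      edges := {e \<in> edges G. src G e \<notin> S \<and> tgt G e \<notin> S}\<rparr>"

definition FvsNum :: "('v,'e) cgraph \<Rightarrow> nat" where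
  "FvsNum G = (LEAST k. \<exists>S \<subseteq> verts G. card S = k \<and> acyclic_g (delete_verts G S))"

definition union_of_cycles :: "('v,'e) cgraph \<Rightarrow> nat \<Rightarrow> bool" where
  "union_of_cycles G r \<longleftrightarrow> (\<exists>C :: nat \<Rightarrow> 'e list \<times> 'v list.
     (\<forall>j<r. is_cycle G (fst (C j)) (snd (C j))) \<and>
     (\<forall>i<r. \<forall>j<r. i \<noteq> j \<longrightarrow> set (snd (C i)) \<inter> set (snd (C j)) = {}) \<and>
     verts G = (\<Union>j<r. set (snd (C j))) \<and> edges G = (\<Union>j<r. set (fst (C j))))"

definition extends_by_trees :: "('v,'e) cgraph \<Rightarrow> ('v,'e) cgraph \<Rightarrow> bool" where
  "extends_by_trees G H \<longleftrightarrow> wf_cgraph H \<and> verts G \<subseteq> verts H \<and> edges G \<subseteq> edges H \<and>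
     (\<forall>e\<in>edges G. src H e = src G e \<and> tgt H e = tgt G e \<and> elen H e = elen G e) \<and>
     (\<forall>e\<in>edges H - edges G. src H e \<notin> verts G \<and> tgt H e \<notin> verts G) \<and>
     acyclic_g (delete_verts H (verts G))"

definition zero_extension :: "('v,'e) cgraph \<Rightarrow> ('v,'e) cgraph \<Rightarrow> ('e \<Rightarrow> real measure)
    \<Rightarrow> ('e \<Rightarrow> real measure) \<Rightarrow> bool" where
  "zero_extension G H \<mu> \<nu> \<longleftrightarrow> valuation H \<nu> \<and> (\<forall>e\<in>edges G. \<nu> e = \<mu> e) \<and>
     (\<forall>e\<in>edges H - edges G. emeasure (\<nu> e) {0<..<elen H e} = 0)"

end

theory Submission imports Defs begin

definition cd :: "real \<Rightarrow> real \<Rightarrow> real \<Rightarrow> real" where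
  "cd L x y = min \<bar>x - y\<bar> (L - \<bar>x - y\<bar>)"

definition ptI :: "nat \<Rightarrow> real set \<Rightarrow> (nat,nat) cpoint set" where
  "ptI j I = (\<lambda>t. Pt j t) ` I"

locale loopg =
  fixes H :: "(nat,nat) cgraph" and r :: nat and L :: "nat \<Rightarrow> real"
  assumes newe: "\<And>e. e \<in> edges H \<Longrightarrow> src H e < r \<or> tgt H e < r \<Longrightarrow> e < r"
    and olde: "\<And>e. e < r \<Longrightarrow> e \<in> edges H \<and> src H e = e \<and> tgt H e = e \<and> elen H e = L e"
    and Lpos: "\<And>e. e < r \<Longrightarrow> L e > 0"
begin

definition inC :: "nat \<Rightarrow> (nat,nat) cpoint \<Rightarrow> real \<Rightarrow> bool" where
  "inC j x th \<longleftrightarrow> j < r \<and> ((x = Vtx j \<and> th = 0) \<or> (x = Pt j th \<and> 0 < th \<and> th < L j))"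

lemma inC_det: "inC j x a \<Longrightarrow> inC j' x b \<Longrightarrow> j = j' \<and> a = b"
  unfolding inC_def by auto

definition pc :: "nat \<Rightarrow> real \<Rightarrow> real" where
  "pc j a = (if a \<le> 0 \<or> L j \<le> a then 0 else a)"

lemma step_lemma:
  assumes v: "valid_step H (e,a,b)" and st: "step_start H (e,a,b) = x" and c: "inC j x th"
  shows "e = j \<and> th = pc j a \<and> inC j (step_end H (e,a,b)) (pc j b) \<and> cd (L j) th (pc j b) \<le> \<bar>b - a\<bar>"
proof -
  have eH: "e \<in> edges H" and a: "0 \<le> a" "a \<le> elen H e" and b: "0 \<le> b" "b \<le> elen H e"
    using v by (auto simp: valid_step_def)
  have jr: "j < r" using c by (simp add: inC_def)
  have ej: "e = j"
  proof (cases "a \<le> 0 \<or> elen H e \<le> a")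
    case True
    then have "x = Vtx (src H e) \<or> x = Vtx (tgt H e)" using st by (auto simp: step_start_def loc_def)
    then have "x = Vtx j" "src H e = j \<or> tgt H e = j" using c by (auto simp: inC_def)
    then have "e < r" using newe[OF eH] jr by auto
    then show ?thesis using olde[of e] \<open>src H e = j \<or> tgt H e = j\<close> by auto
  next
    case False
    then have "x = Pt e a" using st by (auto simp: step_start_def loc_def)
    then show ?thesis using c by (auto simp: inC_def)
  qed
  have el: "elen H e = L j" using olde[OF jr] ej by simp
  have Lj: "L j > 0" using Lpos[OF jr] .
  have locv: "\<And>t. 0 \<le> t \<Longrightarrow> t \<le> L j \<Longrightarrow> inC j (loc H e t) (pc j t)"
    using olde[OF jr] ej jr el by (auto simp: inC_def loc_def pc_def)
  have "inC j x (pc j a)" using locv[of a] a el st by (simp add: step_start_def)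
  then have th: "th = pc j a" using inC_det c by blast
  have "inC j (step_end H (e,a,b)) (pc j b)" using locv[of b] b el by (simp add: step_end_def)
  moreover have "cd (L j) (pc j a) (pc j b) \<le> \<bar>b - a\<bar>"
    using a b el Lj by (auto simp: cd_def pc_def min_def abs_if)
  ultimately show ?thesis using ej th by simp
qed


lemma cd_tri: "0 < Lj \<Longrightarrow> 0 \<le> x \<Longrightarrow> x < Lj \<Longrightarrow> 0 \<le> y \<Longrightarrow> y < Lj \<Longrightarrow> 0 \<le> z \<Longrightarrow> z < Lj
  \<Longrightarrow> cd Lj x z \<le> cd Lj x y + cd Lj y z"
  by (auto simp: cd_def min_def abs_if)

lemma inC_range: "inC j x th \<Longrightarrow> 0 \<le> th \<and> th < L j"
  using Lpos unfolding inC_def by auto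

lemma walk_comp:
  "is_walk H x y ws \<Longrightarrow> inC j x th \<Longrightarrow> \<exists>th'. inC j y th' \<and> cd (L j) th th' \<le> walk_len ws"
proof (induction ws arbitrary: x th)
  case Nil
  then show ?case by (auto simp: is_walk_def walk_len_def cd_def inC_def)
next
  case (Cons w ws)
  obtain e a b where w: "w = (e,a,b)" by (cases w) auto
  have v: "valid_step H w" and st: "step_start H w = x"
    using Cons.prems by (auto simp: is_walk_def)
  from step_lemma[OF v[unfolded w] st[unfolded w] Cons.prems(2)]
  have S: "e = j" "th = pc j a" "inC j (step_end H (e,a,b)) (pc j b)" "cd (L j) th (pc j b) \<le> \<bar>b - a\<bar>"
    by auto
  show ?case
  proof (cases "ws = []")
    case True
    then have "y = step_end H w" using Cons.prems by (auto simp: is_walk_def)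
    then show ?thesis using S True w by (auto simp: walk_len_def step_len_def)
  next
    case False
    have "is_walk H (step_end H w) y ws"
      unfolding is_walk_def
    proof (rule disjI2, intro conjI allI impI)
      show "ws \<noteq> []" by fact
      show "\<forall>w\<in>set ws. valid_step H w" using Cons.prems by (auto simp: is_walk_def)
      show "step_start H (hd ws) = step_end H w"
        using Cons.prems(1) False by (auto simp: is_walk_def hd_conv_nth elim!: allE[of _ 0])
      show "step_end H (last ws) = y" using Cons.prems(1) False by (auto simp: is_walk_def)
      fix i assume "Suc i < length ws"
      then show "step_end H (ws ! i) = step_start H (ws ! Suc i)"
        using Cons.prems(1) by (auto simp: is_walk_def elim!: allE[of _ "Suc i"])
    qed
    from Cons.IH[OF this] S(3) w obtain th' where th': "inC j y th'" "cd (L j) (pc j b) th' \<le> walk_len ws"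
      by auto
    have "cd (L j) th th' \<le> cd (L j) th (pc j b) + cd (L j) (pc j b) th'"
      using cd_tri[of "L j" th "pc j b" th'] inC_range[OF Cons.prems(2)] inC_range[OF S(3)]
        inC_range[OF th'(1)] by auto
    then show ?thesis using th' S w by (auto simp: walk_len_def step_len_def)
  qed
qed

lemma Dist_ge: "inC j x th \<Longrightarrow> (\<And>th'. inC j y th' \<Longrightarrow> ereal c \<le> ereal (cd (L j) th th')) \<Longrightarrow> ereal c \<le> Dist H x y"
  unfolding Dist_def
proof (rule INF_greatest)
  fix ws assume "inC j x th" "(\<And>th'. inC j y th' \<Longrightarrow> ereal c \<le> ereal (cd (L j) th th'))" "ws \<in> {ws. is_walk H x y ws}"
  then show "ereal c \<le> ereal (walk_len ws)" using walk_comp[of x y ws j th] by force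
qed

lemma Dist_le:
  assumes j: "j < r" and t1: "0 < t1" "t1 < L j" and t2: "0 < t2" "t2 < L j"
  shows "Dist H (Pt j t1) (Pt j t2) \<le> ereal (cd (L j) t1 t2)"
proof -
  have o: "j \<in> edges H" "src H j = j" "tgt H j = j" "elen H j = L j" using olde[OF j] by auto
  have pts: "Pt j t1 \<in> cake_points H" using o t1 by (auto simp: cake_points_def)
  have "Dist H (Pt j t1) (Pt j t2) \<le> ereal (walk_len [(j,t1,t2)])"
    unfolding Dist_def by (rule INF_lower) (use o t1 t2 in \<open>auto simp: is_walk_def valid_step_def step_start_def step_end_def loc_def\<close>)
  then have d1: "Dist H (Pt j t1) (Pt j t2) \<le> ereal \<bar>t1 - t2\<bar>" by (simp add: walk_len_def step_len_def abs_minus_commute)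
  have d2: "Dist H (Pt j t1) (Pt j t2) \<le> ereal (L j - \<bar>t1 - t2\<bar>)"
  proof (cases "t1 \<le> t2")
    case True
    have "Dist H (Pt j t1) (Pt j t2) \<le> ereal (walk_len [(j,t1,0),(j,L j,t2)])"
      unfolding Dist_def by (rule INF_lower) (use o t1 t2 in \<open>auto simp: is_walk_def valid_step_def step_start_def step_end_def loc_def nth_Cons split: nat.splits\<close>)
    moreover have "walk_len [(j,t1,0),(j,L j,t2)] = L j - \<bar>t1 - t2\<bar>" using True t1 t2 by (simp add: walk_len_def step_len_def)
    ultimately show ?thesis by simp
  next
    case False
    have "Dist H (Pt j t1) (Pt j t2) \<le> ereal (walk_len [(j,t1,L j),(j,0,t2)])"
      unfolding Dist_def by (rule INF_lower) (use o t1 t2 in \<open>auto simp: is_walk_def valid_step_def step_start_def step_end_def loc_def nth_Cons split: nat.splits\<close>)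
    moreover have "walk_len [(j,t1,L j),(j,0,t2)] = L j - \<bar>t1 - t2\<bar>" using False t1 t2 by (simp add: walk_len_def step_len_def)
    ultimately show ?thesis by simp
  qed
  show ?thesis using d1 d2 by (simp add: cd_def min_def)
qed


lemma SetDist_ge: "(\<And>x y. x \<in> P \<Longrightarrow> y \<in> Q \<Longrightarrow> c \<le> Dist H x y) \<Longrightarrow> c \<le> SetDist H P Q"
  unfolding SetDist_def by (auto intro!: INF_greatest)

lemma SetDist_pt: "c \<le> SetDist H P Q \<Longrightarrow> x \<in> P \<Longrightarrow> y \<in> Q \<Longrightarrow> c \<le> Dist H x y"
  unfolding SetDist_def by (meson INF_lower order_trans)

lemma piece_set:
  assumes "j < r" "I \<subseteq> {0<..<L j}" "e \<in> edges H"
  shows "{t. 0 < t \<and> t < elen H e \<and> Pt e t \<in> ptI j I} = (if e = j then I else {})"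
  using assms olde[of j] by (auto simp: ptI_def)

lemma conn_piece:
  assumes j: "j < r" and ab: "0 < a" "b < L j"
  shows "connected_piece H (ptI j {a..b})"
proof -
  have o: "j \<in> edges H" "src H j = j" "tgt H j = j" "elen H j = L j" using olde[OF j] by auto
  have sub: "ptI j {a..b} \<subseteq> cake_points H" using o ab by (auto simp: cake_points_def ptI_def)
  have pc: "is_piece H (ptI j {a..b})"
    unfolding is_piece_def
  proof (intro conjI ballI sub)
    fix e assume e: "e \<in> edges H"
    have eq: "{t. 0 < t \<and> t < elen H e \<and> Pt e t \<in> ptI j {a..b}} = (if e = j then {a..b} else {})"
      by (rule piece_set[OF j _ e]) (use ab in auto)
    show "\<exists>I. finite I \<and> (\<forall>J\<in>I. is_interval (J::real set)) \<and> {t. 0 < t \<and> t < elen H e \<and> Pt e t \<in> ptI j {a..b}} = \<Union> I"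
      by (rule exI[of _ "if e = j then {{a..b}} else {}"]) (auto simp: eq is_interval_cc)
  qed
  show ?thesis unfolding connected_piece_def
  proof (intro conjI pc ballI)
    fix x y assume "x \<in> ptI j {a..b}" "y \<in> ptI j {a..b}"
    then obtain t1 t2 where t: "x = Pt j t1" "y = Pt j t2" "t1 \<in> {a..b}" "t2 \<in> {a..b}" by (auto simp: ptI_def)
    show "\<exists>ws. is_walk H x y ws \<and> walk_points H x ws \<subseteq> ptI j {a..b}"
    proof (rule exI[of _ "[(j,t1,t2)]"], intro conjI)
      show "is_walk H x y [(j, t1, t2)]" using t o ab
        by (auto simp: is_walk_def valid_step_def step_start_def step_end_def loc_def)
      show "walk_points H x [(j, t1, t2)] \<subseteq> ptI j {a..b}" using t o ab
        by (auto simp: walk_points_def step_points_def loc_def ptI_def intro!: imageI)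
    qed
  qed
qed

end

lemma dens_meas:
  fixes S :: "real set"
  assumes "S \<in> sets borel" "A \<in> sets borel"
  shows "emeasure (density lborel (indicator S)) A = emeasure lborel (S \<inter> A)"
proof -
  have "emeasure (density lborel (indicator S)) A = (\<integral>\<^sup>+ x. indicator S x * indicator A x \<partial>lborel)"
    by (rule emeasure_density) (use assms in auto)
  also have "\<dots> = (\<integral>\<^sup>+ x. indicator (S \<inter> A) x \<partial>lborel)"
    by (simp add: indicator_inter_arith)
  also have "\<dots> = emeasure lborel (S \<inter> A)" using assms by simp
  finally show ?thesis .
qed

lemma dens_pos:
  fixes S :: "real set"
  assumes "S \<in> sets borel" "measure (density lborel (indicator S)) X > 0"
  shows "X \<inter> S \<noteq> {}"
proof
  assume "X \<inter> S = {}"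
  then have "X \<subseteq> - S" by auto
  moreover have "- S \<in> sets (density lborel (indicator S))" using assms by auto
  ultimately have "emeasure (density lborel (indicator S)) X \<le> emeasure (density lborel (indicator S)) (- S)"
    by (rule emeasure_mono)
  also have "\<dots> = 0" using assms by (subst dens_meas) auto
  finally show False using assms(2) by (simp add: measure_def)
qed


locale cons =
  fixes n r :: nat and s :: real
  assumes spos: "s > 0" and n2: "n \<ge> 2" and r1: "r \<ge> 1"
begin

definition "rp = min r (n - 1)"
definition "mm j = (if j = 0 then n - rp + 1 else if j < rp then 2 else (1::nat))"
definition "w = s / (2 * (real n + 1)^2)"
definition "v = (s + w) / (real n + 1)"
definition "U = (real n + 1) * v"
definition "LL j = real (mm j) * U"
definition "cen i l = real l * U + real (i+1) * v"
definition "spI i l = {cen i l - w/2 .. cen i l + w/2}"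
definition "S i j = (if j < rp then (\<Union>l<mm j. spI i l) else {})"

lemma rp: "1 \<le> rp" "rp \<le> n - 1" "rp \<le> r" using n2 r1 by (auto simp: rp_def)

lemma mm: "j < rp \<Longrightarrow> 2 \<le> mm j \<and> mm j \<le> n" using rp n2 by (auto simp: mm_def)

lemma wpos: "w > 0" using spos by (simp add: w_def)
lemma U_eq: "U = s + w" by (simp add: U_def v_def)
lemma vpos: "v > 0" using spos wpos by (simp add: v_def)
lemma Upos: "U > 0" using U_eq spos wpos by simp
lemma wv: "(real n + 1) * w < v"
proof -
  have "2 * (real n + 1)^2 * w = s" using spos by (simp add: w_def)
  then have "(real n + 1) * (2 * (real n + 1) * w) = s" by (simp add: power2_eq_square algebra_simps)
  then have "(real n + 1) * (2 * (real n + 1) * w) < (real n + 1) * v"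
    using wpos by (simp add: v_def)
  then have "2 * (real n + 1) * w < v" by simp
  moreover have "(real n + 1) * w \<le> 2 * (real n + 1) * w" using wpos by simp
  ultimately show ?thesis by linarith
qed

lemma LLpos: "LL j > 0" using Upos by (simp add: LL_def mm_def)

lemma spI_sub:
  assumes "i < n" "l < mm j"
  shows "spI i l \<subseteq> {0<..<LL j}"
proof -
  have "real l \<le> real (mm j) - 1" using assms by linarith
  then have a: "real l * U \<le> (real (mm j) - 1) * U" using Upos by (intro mult_right_mono) auto
  have b: "real (i+1) * v \<le> real n * v" using assms vpos by (intro mult_right_mono) auto
  have c: "v \<le> real (i+1) * v" using vpos by simp
  have d: "real n * v = U - v" by (simp add: U_def algebra_simps)
  have z: "0 \<le> real l * U" using Upos by simp
  have e: "real (mm j) * U = (real (mm j) - 1) * U + U" by (simp add: algebra_simps)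
  have f: "real n * w \<ge> 0" "w \<le> real n * w + w" using wpos by auto
  show ?thesis
  proof
    fix x assume "x \<in> spI i l"
    then have x: "real l * U + real (i+1) * v - w/2 \<le> x" "x \<le> real l * U + real (i+1) * v + w/2"
      by (auto simp: spI_def cen_def)
    have wv': "real n * w + w < v" using wv by (simp add: algebra_simps)
    have "0 < x" using x z c wv' f vpos wpos by linarith
    moreover have "x < LL j" using x a b d e wv' f wpos unfolding LL_def by linarith
    ultimately show "x \<in> {0<..<LL j}" by simp
  qed
qed

lemma spI_sep:
  assumes "l < mm j" "l' < mm j" "l \<noteq> l'" "t \<in> spI i l" "t' \<in> spI i l'"
  shows "s \<le> cd (LL j) t t'"
proof -
  have e: "t - t' = (real l - real l') * U + ((t - cen i l) - (t' - cen i l'))"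
    by (simp add: cen_def algebra_simps)
  have dl: "\<bar>t - cen i l\<bar> \<le> w/2" "\<bar>t' - cen i l'\<bar> \<le> w/2" using assms unfolding spI_def atLeastAtMost_iff by linarith+
  have d1: "1 \<le> \<bar>real l - real l'\<bar>" using assms by linarith
  have d2: "\<bar>real l - real l'\<bar> \<le> real (mm j) - 1" using assms by linarith
  have a1: "U \<le> \<bar>real l - real l'\<bar> * U" using d1 Upos by simp
  have a2: "\<bar>real l - real l'\<bar> * U \<le> (real (mm j) - 1) * U" using d2 Upos by (intro mult_right_mono) auto
  have ab: "\<bar>(real l - real l') * U\<bar> = \<bar>real l - real l'\<bar> * U" using Upos by (simp add: abs_mult)
  have LL: "LL j = (real (mm j) - 1) * U + U" by (simp add: LL_def algebra_simps)
  define X where "X = (real l - real l') * U"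
  have e': "t - t' = X + ((t - cen i l) - (t' - cen i l'))" using e X_def by simp
  have "\<bar>t - t'\<bar> \<ge> \<bar>X\<bar> - w" using e' dl by (simp add: abs_if split: if_splits)
  moreover have "\<bar>t - t'\<bar> \<le> \<bar>X\<bar> + w" using e' dl by (simp add: abs_if split: if_splits)
  ultimately have "\<bar>t - t'\<bar> \<ge> \<bar>(real l - real l') * U\<bar> - w" "\<bar>t - t'\<bar> \<le> \<bar>(real l - real l') * U\<bar> + w"
    unfolding X_def by auto
  then have "s \<le> \<bar>t - t'\<bar>" "s \<le> LL j - \<bar>t - t'\<bar>" using a1 a2 ab LL U_eq by linarith+
  then show ?thesis unfolding cd_def by simp
qed

end


lemma spread:
  fixes f :: "'a \<Rightarrow> real"
  shows "finite F \<Longrightarrow> F \<noteq> {} \<Longrightarrow> (\<forall>x\<in>F. lo \<le> f x \<and> f x \<le> hi) \<Longrightarrow>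
    (\<forall>x\<in>F. \<forall>y\<in>F. x \<noteq> y \<longrightarrow> s \<le> \<bar>f x - f y\<bar>) \<Longrightarrow> 0 \<le> s \<Longrightarrow> (real (card F) - 1) * s \<le> hi - lo"
proof (induction "card F" arbitrary: F hi)
  case 0
  then show ?case by simp
next
  case (Suc k)
  have "Max (f ` F) \<in> f ` F" using Suc.prems by (intro Max_in) auto
  then obtain x where x: "x \<in> F" "f x = Max (f ` F)" by auto
  have xm: "\<forall>y\<in>F. f y \<le> f x" using x Suc.prems(1) by auto
  show ?case
  proof (cases "F - {x} = {}")
    case True
    then have "F = {x}" using x by auto
    then show ?thesis using Suc.prems by auto
  next
    case False
    have "(real (card (F - {x})) - 1) * s \<le> (f x - s) - lo"
    proof (rule Suc.hyps(1))
      show "k = card (F - {x})" using Suc.hyps(2) x Suc.prems(1) by simp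
      show "finite (F - {x})" using Suc.prems by simp
      show "F - {x} \<noteq> {}" by fact
      show "\<forall>y\<in>F - {x}. lo \<le> f y \<and> f y \<le> f x - s"
      proof
        fix y assume y: "y \<in> F - {x}"
        then have "s \<le> \<bar>f y - f x\<bar>" "f y \<le> f x" using Suc.prems(4) xm x(1) by auto
        then show "lo \<le> f y \<and> f y \<le> f x - s" using Suc.prems(3) y by auto
      qed
      show "\<forall>a\<in>F - {x}. \<forall>b\<in>F - {x}. a \<noteq> b \<longrightarrow> s \<le> \<bar>f a - f b\<bar>" using Suc.prems(4) by auto
      show "0 \<le> s" by fact
    qed
    moreover have "real (card (F - {x})) = real (card F) - 1" using x Suc.prems(1) by (simp add: of_nat_diff card_gt_0_iff Suc.hyps(2)[symmetric])
    moreover have "f x \<le> hi" using Suc.prems(3) x by auto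
    ultimately show ?thesis by (simp add: algebra_simps)
  qed
qed

lemma rigid:
  fixes T :: "nat \<Rightarrow> real"
  assumes F: "finite F" and p: "p \<in> F" and q: "q \<in> F" "q \<noteq> p" and L: "L > 0" and s: "s > 0"
    and rng: "\<forall>i\<in>F. 0 < T i \<and> T i < L"
    and sep: "\<forall>i\<in>F. \<forall>i'\<in>F. i \<noteq> i' \<longrightarrow> s \<le> cd L (T i) (T i')"
    and m: "real m \<le> real (card F)"
  shows "\<exists>c::nat. c \<ge> 1 \<and> real c * s \<le> (if T p < T q then T q - T p else T q - T p + L)
      \<and> (if T p < T q then T q - T p else T q - T p + L) \<le> L - (real m - real c) * s
      \<and> (if T p < T q then T q - T p else T q - T p + L) < L"
proof -
  define th where "th i = (if T p < T i then T i - T p else T i - T p + L)" for i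
  have rng2: "s \<le> th i \<and> th i \<le> L - s" if "i \<in> F - {p}" for i
  proof -
    have "s \<le> cd L (T i) (T p)" using sep that p by auto
    then have "s \<le> \<bar>T i - T p\<bar>" "s \<le> L - \<bar>T i - T p\<bar>" by (auto simp: cd_def)
    then show ?thesis unfolding th_def using s by (auto simp: abs_if split: if_splits)
  qed
  have sep2: "s \<le> \<bar>th i - th i'\<bar>" if "i \<in> F - {p}" "i' \<in> F - {p}" "i \<noteq> i'" for i i'
  proof -
    have "s \<le> cd L (T i) (T i')" using sep that by auto
    then have a: "s \<le> \<bar>T i - T i'\<bar>" "s \<le> L - \<bar>T i - T i'\<bar>" by (auto simp: cd_def)
    have b: "s \<le> \<bar>T i - T p\<bar>" "s \<le> \<bar>T i' - T p\<bar>" using sep that p by (auto simp: cd_def)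
    show ?thesis unfolding th_def using a b s by (auto simp: abs_if split: if_splits)
  qed
  define B where "B = {i \<in> F - {p}. th i < th q}"
  define A where "A = {i \<in> F - {p}. th q < th i}"
  have qF: "q \<in> F - {p}" using q by auto
  have dec: "F - {p} = insert q (B \<union> A)"
  proof
    show "F - {p} \<subseteq> insert q (B \<union> A)"
    proof
      fix i assume i: "i \<in> F - {p}"
      show "i \<in> insert q (B \<union> A)"
      proof (cases "i = q")
        case False
        then have "s \<le> \<bar>th i - th q\<bar>" using sep2[OF i qF] by auto
        then have "th i \<noteq> th q" using s by auto
        then show ?thesis using i by (auto simp: A_def B_def)
      qed simp
    qed
  qed (use qF in \<open>auto simp: A_def B_def\<close>)
  have fin: "finite A" "finite B" using F by (auto simp: A_def B_def)
  have disj: "q \<notin> B" "q \<notin> A" "A \<inter> B = {}" by (auto simp: A_def B_def)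
  have "card (F - {p}) = card F - 1" using F p by simp
  moreover have "card (insert q (B \<union> A)) = Suc (card B + card A)"
    using fin disj by (simp add: card_Un_disjoint Int_commute)
  ultimately have cardF: "card F - 1 = Suc (card B + card A)" using dec by simp
  have cardF': "real (card F) = real (card B) + real (card A) + 2"
    using cardF p F by (metis Suc_diff_1 card_gt_0_iff empty_iff of_nat_Suc of_nat_add add.assoc one_add_one add.commute)
  have sB: "(real (card (insert q B)) - 1) * s \<le> th q - s"
  proof (rule spread[where F="insert q B" and lo=s and hi="th q" and f=th and s=s])
    have sub: "insert q B \<subseteq> F - {p}" using qF by (auto simp: B_def)
    show "\<forall>x\<in>insert q B. \<forall>y\<in>insert q B. x \<noteq> y \<longrightarrow> s \<le> \<bar>th x - th y\<bar>"
      using sep2 sub by blast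
    show "\<forall>x\<in>insert q B. s \<le> th x \<and> th x \<le> th q" using rng2 qF by (auto simp: B_def)
  qed (use fin s in auto)
  have sA: "(real (card (insert q A)) - 1) * s \<le> (L - s) - th q"
  proof (rule spread[where F="insert q A" and lo="th q" and hi="L - s" and f=th and s=s])
    have sub: "insert q A \<subseteq> F - {p}" using qF by (auto simp: A_def)
    show "\<forall>x\<in>insert q A. \<forall>y\<in>insert q A. x \<noteq> y \<longrightarrow> s \<le> \<bar>th x - th y\<bar>"
      using sep2 sub by blast
    show "\<forall>x\<in>insert q A. th q \<le> th x \<and> th x \<le> L - s" using rng2 qF by (auto simp: A_def)
  qed (use fin s in auto)
  have sB': "real (card B) * s \<le> th q - s" using sB fin disj by simp
  have sA': "real (card A) * s \<le> (L - s) - th q" using sA fin disj by simp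
  show ?thesis
  proof (rule exI[of _ "card B + 1"], intro conjI)
    show "1 \<le> card B + 1" by simp
    show "real (card B + 1) * s \<le> (if T p < T q then T q - T p else T q - T p + L)"
      using sB' by (simp add: th_def algebra_simps)
    have "(real m - real (card B + 1)) * s \<le> (real (card A) + 1) * s"
      using m cardF' s by (intro mult_right_mono) auto
    then show "(if T p < T q then T q - T p else T q - T p + L) \<le> L - (real m - real (card B + 1)) * s"
      using sA' by (simp add: th_def algebra_simps)
    show "(if T p < T q then T q - T p else T q - T p + L) < L" using rng2[OF qF] s by (simp add: th_def)
  qed
qed


context cons begin

lemma nws: "real n * w < s"
proof -
  have a: "(real n + 1) * 1 \<le> (real n + 1) * (real n + 1)" by (intro mult_left_mono) auto
  have "(real n + 1)^2 \<ge> real n + 1" using a by (simp add: power2_eq_square)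
  then have "real n < 2 * (real n + 1)^2" by linarith
  then have "real n * s < 2 * (real n + 1)^2 * s" using spos by simp
  then show ?thesis using spos by (simp add: w_def field_simps)
qed

lemma phase:
  assumes j: "j < rp" and pq: "p < n" "q < n" "p \<noteq> q" and l: "lp < mm j" "lq < mm j"
    and T: "Tp \<in> spI p lp" "Tq \<in> spI q lq" and c: "real c * s \<le> th" "th \<le> LL j - (real (mm j) - real c) * s"
    and th: "th = Tq - Tp + real b * LL j" "th < LL j"
  shows False
proof -
  define m where "m = mm j"
  have m: "2 \<le> m" "m \<le> n" using mm[OF j] by (auto simp: m_def)
  have mw: "real m * w \<le> real n * w" using m wpos by (intro mult_right_mono) auto
  have LLe: "LL j = real m * s + real m * w" by (simp add: LL_def U_eq m_def algebra_simps)
  have "real c * s < (real m + 1) * s" using c th LLe mw nws by (simp add: algebra_simps)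
  then have "real c < real m + 1" using spos by simp
  then have cm: "c \<le> m" by linarith
  have cw: "real c * w \<le> real m * w" using cm wpos by (intro mult_right_mono) auto
  define D where "D = th - real c * U"
  have D1: "- (real m * w) \<le> D" using c cw by (simp add: D_def U_eq algebra_simps)
  have "0 \<le> real c * w" using wpos by simp
  moreover have "real c * U = real c * s + real c * w" by (simp add: U_eq algebra_simps)
  moreover have "th \<le> real c * s + real m * w" using c(2) LLe by (simp add: m_def algebra_simps)
  ultimately have D2: "D \<le> real m * w" unfolding D_def by linarith
  define K :: int where "K = int lq - int lp + int b * int m - int c"
  define Z :: int where "Z = K * (int n + 1) + int q - int p"
  have dl: "\<bar>Tp - cen p lp\<bar> \<le> w/2" "\<bar>Tq - cen q lq\<bar> \<le> w/2"
    using T unfolding spI_def atLeastAtMost_iff by linarith+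
  have Deq: "D = real_of_int Z * v + ((Tq - cen q lq) - (Tp - cen p lp))"
    unfolding D_def Z_def K_def th(1) LL_def cen_def U_def m_def[symmetric] by (simp add: algebra_simps)
  have ipq: "int p < int n" "int q < int n" "0 \<le> int p" "0 \<le> int q" using pq by auto
  have Z0: "Z \<noteq> 0"
  proof (cases "K = 0")
    case True then show ?thesis using pq by (simp add: Z_def)
  next
    case False
    show ?thesis
    proof (cases "K \<ge> 1")
      case True
      then have "K * (int n + 1) \<ge> 1 * (int n + 1)" by (intro mult_right_mono) auto
      then have "Z > 0" using ipq unfolding Z_def by (smt (verit))
      then show ?thesis by simp
    next
      case False
      then have "K \<le> -1" using \<open>K \<noteq> 0\<close> by simp
      then have "K * (int n + 1) \<le> (-1) * (int n + 1)" by (intro mult_right_mono) auto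
      then have "Z < 0" using ipq unfolding Z_def by (smt (verit))
      then show ?thesis by simp
    qed
  qed
  then have "1 \<le> \<bar>real_of_int Z\<bar>" by linarith
  then have Zv: "v \<le> \<bar>real_of_int Z * v\<bar>" using vpos by (simp add: abs_mult)
  have "v - w \<le> \<bar>D\<bar>" using Deq Zv dl by (simp add: abs_if split: if_splits)
  then have "v \<le> real m * w + w" using D1 D2 by (simp add: abs_if split: if_splits)
  then show False using mw wv by (simp add: algebra_simps)
qed

end


context cons begin

definition G :: "(nat,nat) cgraph" where
  "G = \<lparr>verts = {..<r}, edges = {..<r}, src = id, tgt = id, elen = LL\<rparr>"

definition mu :: "nat \<Rightarrow> nat \<Rightarrow> real measure" where
  "mu i e = density lborel (indicator (S i e))"

lemma S_borel: "S i j \<in> sets borel"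
  unfolding S_def spI_def by auto

lemma S_sub: "i < n \<Longrightarrow> S i j \<subseteq> {0<..<LL j}"
  unfolding S_def using spI_sub by auto

lemma wf_G: "wf_cgraph G" using LLpos by (auto simp: wf_cgraph_def G_def)

lemma valuation_G: assumes "i < n" shows "valuation G (mu i)"
  unfolding valuation_def
proof (intro ballI conjI allI)
  fix e assume "e \<in> edges G"
  show "sets (mu i e) = sets borel" by (simp add: mu_def)
  have "emeasure (mu i e) (space (mu i e)) = emeasure lborel (S i e \<inter> UNIV)"
    unfolding mu_def by (subst dens_meas) (auto simp: S_borel)
  also have "\<dots> \<le> emeasure lborel {0..LL e}"
    using S_sub[OF assms, of e] by (intro emeasure_mono) auto
  also have "\<dots> < \<infinity>" using LLpos[of e] by (simp add: emeasure_lborel_Icc_eq)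
  finally show "finite_measure (mu i e)" by (intro finite_measureI) auto
  fix t
  have "emeasure (mu i e) {t} = emeasure lborel (S i e \<inter> {t})"
    unfolding mu_def by (subst dens_meas) (auto simp: S_borel)
  also have "\<dots> \<le> emeasure lborel {t}" by (intro emeasure_mono) auto
  also have "\<dots> = 0" by simp
  finally show "emeasure (mu i e) {t} = 0" by simp
qed

lemma union_G: "union_of_cycles G r"
  unfolding union_of_cycles_def
  by (rule exI[of _ "\<lambda>j. ([j],[j])"]) (auto simp: is_cycle_def G_def)

lemma Fvs_G: "FvsNum G = r"
  unfolding FvsNum_def
proof (rule Least_equality)
  show "\<exists>S\<subseteq>verts G. card S = r \<and> acyclic_g (delete_verts G S)"
    by (rule exI[of _ "{..<r}"]) (auto simp: G_def acyclic_g_def delete_verts_def is_cycle_def)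
next
  fix k assume "\<exists>S\<subseteq>verts G. card S = k \<and> acyclic_g (delete_verts G S)"
  then obtain X where X: "X \<subseteq> {..<r}" "card X = k" "acyclic_g (delete_verts G X)" by (auto simp: G_def)
  show "r \<le> k"
  proof (rule ccontr)
    assume "\<not> r \<le> k"
    then have "X \<noteq> {..<r}" using X by auto
    then obtain j where j: "j < r" "j \<notin> X" using X by auto
    have "is_cycle (delete_verts G X) [j] [j]" using j by (auto simp: is_cycle_def delete_verts_def G_def)
    then show False using X by (auto simp: acyclic_g_def)
  qed
qed

end


locale ext = cons +
  fixes H :: "(nat,nat) cgraph" and nu :: "nat \<Rightarrow> nat \<Rightarrow> real measure"
  assumes ext: "extends_by_trees G H" and ze: "\<forall>i<n. zero_extension G H (mu i) (nu i)"
begin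

sublocale lg: loopg H r LL
proof
  fix e assume e: "e \<in> edges H" "src H e < r \<or> tgt H e < r"
  show "e < r"
  proof (rule ccontr)
    assume "\<not> e < r"
    then have "e \<in> edges H - edges G" using e by (auto simp: G_def)
    then show False using ext e by (auto simp: extends_by_trees_def G_def)
  qed
next
  fix e assume "e < r"
  then show "e \<in> edges H \<and> src H e = e \<and> tgt H e = e \<and> elen H e = LL e"
    using ext by (auto simp: extends_by_trees_def G_def)
next
  fix e show "0 < LL e" by (rule LLpos)
qed

lemma finH: "finite (edges H)" using ext by (auto simp: extends_by_trees_def wf_cgraph_def)

lemma nu_eq: "i < n \<Longrightarrow> e < r \<Longrightarrow> nu i e = mu i e"
  using ze by (auto simp: zero_extension_def G_def)

lemma nu_val: "i < n \<Longrightarrow> valuation H (nu i)"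
  using ze by (auto simp: zero_extension_def)

lemma nu_zero:
  assumes "i < n" "e \<in> edges H" "\<not> e < r"
  shows "measure (nu i e) {t. 0 < t \<and> t < elen H e \<and> P t} = 0"
proof -
  have z: "emeasure (nu i e) {0<..<elen H e} = 0" using ze assms by (auto simp: zero_extension_def G_def)
  have sb: "sets (nu i e) = sets borel" using nu_val[OF assms(1)] assms(2) by (auto simp: valuation_def)
  have "emeasure (nu i e) {t. 0 < t \<and> t < elen H e \<and> P t} \<le> emeasure (nu i e) {0<..<elen H e}"
    by (rule emeasure_mono) (auto simp: sb)
  then show ?thesis using z by (simp add: measure_def)
qed

lemma val_spot:
  assumes i: "i < n" and j: "j < rp" and l: "l < mm j"
  shows "val H (nu i) (ptI j (spI i l)) = w"
proof -
  have jr: "j < r" using j rp by simp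
  have sub: "spI i l \<subseteq> {0<..<LL j}" using spI_sub[OF i l] .
  have "val H (nu i) (ptI j (spI i l)) = (\<Sum>e\<in>edges H. if e = j then measure (nu i j) (spI i l) else 0)"
    unfolding val_def by (intro sum.cong refl) (simp add: lg.piece_set[OF jr sub])
  also have "\<dots> = measure (nu i j) (spI i l)" using finH lg.olde[OF jr] by simp
  also have "\<dots> = measure (mu i j) (spI i l)" using nu_eq[OF i jr] by simp
  also have "\<dots> = enn2real (emeasure lborel (S i j \<inter> spI i l))"
    unfolding mu_def measure_def by (subst dens_meas) (auto simp: S_borel spI_def)
  also have "S i j \<inter> spI i l = spI i l" using j l by (auto simp: S_def)
  also have "enn2real (emeasure lborel (spI i l)) = w" using wpos by (simp add: spI_def)
  finally show ?thesis .
qed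

lemma val_pos:
  assumes i: "i < n" and pos: "0 < val H (nu i) X"
  shows "\<exists>j<rp. \<exists>l<mm j. \<exists>t\<in>spI i l. Pt j t \<in> X"
proof -
  have "\<exists>e\<in>edges H. 0 < measure (nu i e) {t. 0 < t \<and> t < elen H e \<and> Pt e t \<in> X}"
  proof (rule ccontr)
    assume "\<not> ?thesis"
    then have "val H (nu i) X \<le> 0" unfolding val_def by (intro sum_nonpos) auto
    then show False using pos by simp
  qed
  then obtain e where e: "e \<in> edges H" and mp: "0 < measure (nu i e) {t. 0 < t \<and> t < elen H e \<and> Pt e t \<in> X}"
    by blast
  have er: "e < r" using nu_zero[OF i e, of "\<lambda>t. Pt e t \<in> X"] mp by (cases "e < r") auto
  have "0 < measure (mu i e) {t. 0 < t \<and> t < elen H e \<and> Pt e t \<in> X}" using mp nu_eq[OF i er] by simp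
  then have "{t. 0 < t \<and> t < elen H e \<and> Pt e t \<in> X} \<inter> S i e \<noteq> {}"
    unfolding mu_def by (intro dens_pos S_borel)
  then obtain t where t: "Pt e t \<in> X" "t \<in> S i e" by auto
  then have "e < rp" by (auto simp: S_def split: if_splits)
  then show ?thesis using t by (auto simp: S_def)
qed

definition "kk = n + rp - 1"

definition "cyc x = (if x < mm 0 then 0 else 1 + (x - mm 0) div 2)"
definition "spt x = (if x < mm 0 then x else (x - mm 0) mod 2)"

lemma mm0: "mm 0 = n - rp + 1" using rp by (simp add: mm_def)

lemma cyc_spt: "x < kk \<Longrightarrow> cyc x < rp \<and> spt x < mm (cyc x)"
  using rp n2 unfolding cyc_def spt_def kk_def mm0 by (auto simp: mm_def)

lemma cyc_inj: "x < kk \<Longrightarrow> y < kk \<Longrightarrow> cyc x = cyc y \<Longrightarrow> spt x = spt y \<Longrightarrow> x = y"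
proof -
  assume a: "cyc x = cyc y" "spt x = spt y"
  show "x = y"
  proof (cases "x < mm 0 \<or> y < mm 0")
    case True then show ?thesis using a unfolding cyc_def spt_def by (auto split: if_splits)
  next
    case False
    then have "(x - mm 0) div 2 = (y - mm 0) div 2" "(x - mm 0) mod 2 = (y - mm 0) mod 2"
      using a unfolding cyc_def spt_def by auto
    then have "x - mm 0 = y - mm 0" by (metis div_mult_mod_eq)
    then show ?thesis using False by linarith
  qed
qed


lemma spI_ivl: "i < n \<Longrightarrow> l < mm j \<Longrightarrow> spI i l = {cen i l - w/2 .. cen i l + w/2} \<and> 0 < cen i l - w/2 \<and> cen i l + w/2 < LL j"
proof -
  assume a: "i < n" "l < mm j"
  have "cen i l - w/2 \<in> spI i l" "cen i l + w/2 \<in> spI i l" using wpos by (auto simp: spI_def)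
  then have "cen i l - w/2 \<in> {0<..<LL j}" "cen i l + w/2 \<in> {0<..<LL j}" using spI_sub[OF a] by blast+
  then show ?thesis by (simp add: spI_def)
qed

lemma MMS_ge:
  assumes i: "i < n"
  shows "w \<le> MMS H (nu i) kk s"
proof -
  define P where "P x = ptI (cyc x) (spI i (spt x))" for x
  have kpos: "0 < kk" using n2 rp by (simp add: kk_def)
  have sepP: "sep_family H s kk P"
    unfolding sep_family_def
  proof (intro conjI allI impI)
    fix x assume x: "x < kk"
    have cs: "cyc x < rp" "spt x < mm (cyc x)" using cyc_spt[OF x] by auto
    then have cr: "cyc x < r" using rp by simp
    show "connected_piece H (P x)"
      using spI_ivl[OF i cs(2)] lg.conn_piece[OF cr] unfolding P_def by metis
  next
    fix x y assume x: "x < kk" and y: "y < kk" and xy: "x \<noteq> y"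
    have cx: "cyc x < rp" "spt x < mm (cyc x)" using cyc_spt[OF x] by auto
    have cy: "cyc y < rp" "spt y < mm (cyc y)" using cyc_spt[OF y] by auto
    have cxr: "cyc x < r" using cx rp by simp
    have key: "s \<le> cd (LL (cyc x)) t t'" if "cyc x = cyc y" "t \<in> spI i (spt x)" "t' \<in> spI i (spt y)" for t t'
    proof -
      have "spt x \<noteq> spt y" using cyc_inj[OF x y] that xy by auto
      then show ?thesis using spI_sep[of "spt x" "cyc x" "spt y" t i t'] cx cy that by auto
    qed
    show "P x \<inter> P y = {}"
    proof (rule ccontr)
      assume "P x \<inter> P y \<noteq> {}"
      then obtain t where "cyc x = cyc y" "t \<in> spI i (spt x)" "t \<in> spI i (spt y)"
        by (auto simp: P_def ptI_def)
      then have "s \<le> cd (LL (cyc x)) t t" by (rule key)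
      then show False using spos by (simp add: cd_def)
    qed
    show "ereal s \<le> SetDist H (P x) (P y)"
    proof (rule lg.SetDist_ge)
      fix a b assume ab: "a \<in> P x" "b \<in> P y"
      then obtain t t' where t: "a = Pt (cyc x) t" "t \<in> spI i (spt x)" "b = Pt (cyc y) t'" "t' \<in> spI i (spt y)"
        by (auto simp: P_def ptI_def)
      have "t \<in> {0<..<LL (cyc x)}" using spI_sub[OF i cx(2)] t by auto
      then have ic: "lg.inC (cyc x) a t" using t cxr by (auto simp: lg.inC_def)
      show "ereal s \<le> Dist H a b"
      proof (rule lg.Dist_ge[OF ic])
        fix th' assume "lg.inC (cyc x) b th'"
        then have "cyc y = cyc x" "th' = t'" using t by (auto simp: lg.inC_def)
        then show "ereal s \<le> ereal (cd (LL (cyc x)) t th')" using key t by auto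
      qed
    qed
  qed
  define Q where "Q = {Min ((\<lambda>j. val H (nu i) (P' j)) ` {..<kk}) | P'. sep_family H s kk P'}"
  have "Min ((\<lambda>j. val H (nu i) (P j)) ` {..<kk}) \<in> Q" using sepP by (auto simp: Q_def)
  moreover have "w \<le> Min ((\<lambda>j. val H (nu i) (P j)) ` {..<kk})"
  proof -
    have "\<forall>x<kk. w \<le> val H (nu i) (P x)"
      using val_spot[OF i] cyc_spt unfolding P_def by auto
    then show ?thesis using kpos by (subst Min_ge_iff) auto
  qed
  moreover have "bdd_above Q"
  proof (rule bdd_aboveI)
    fix z assume "z \<in> Q"
    then obtain P' where z: "z = Min ((\<lambda>j. val H (nu i) (P' j)) ` {..<kk})" by (auto simp: Q_def)
    have "z \<le> val H (nu i) (P' 0)" unfolding z using kpos by (intro Min_le) auto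
    also have "\<dots> \<le> (\<Sum>e\<in>edges H. measure (nu i e) (space (nu i e)))"
      unfolding val_def
    proof (rule sum_mono)
      fix e assume "e \<in> edges H"
      then have "finite_measure (nu i e)" using nu_val[OF i] by (auto simp: valuation_def)
      then show "measure (nu i e) {t. 0 < t \<and> t < elen H e \<and> Pt e t \<in> P' 0} \<le> measure (nu i e) (space (nu i e))"
        by (rule finite_measure.bounded_measure)
    qed
    finally show "z \<le> (\<Sum>e\<in>edges H. measure (nu i e) (space (nu i e)))" .
  qed
  ultimately have "w \<le> Sup Q" by (meson cSup_upper order_trans)
  then show ?thesis by (simp add: MMS_def Q_def)
qed


lemma sum_mm: "(\<Sum>j<rp. mm j - 1) = n - 1"
proof -
  obtain q where q: "rp = Suc q" using rp by (cases rp) auto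
  have "(\<Sum>j<rp. mm j - 1) = (mm 0 - 1) + (\<Sum>j<q. mm (Suc j) - 1)"
    unfolding q by (rule sum.lessThan_Suc_shift)
  also have "(\<Sum>j<q. mm (Suc j) - 1) = (\<Sum>j<q. 1)" using q by (intro sum.cong) (auto simp: mm_def)
  finally show ?thesis using q rp by (simp add: mm_def)
qed

lemma no_alloc:
  "\<not> (\<exists>A. sep_family H s n A \<and> (\<forall>i<n. MMS H (nu i) kk s \<le> val H (nu i) (A i)))"
proof
  assume "\<exists>A. sep_family H s n A \<and> (\<forall>i<n. MMS H (nu i) kk s \<le> val H (nu i) (A i))"
  then obtain A where sf: "sep_family H s n A" and ge: "\<forall>i<n. MMS H (nu i) kk s \<le> val H (nu i) (A i)"
    by blast
  have "\<forall>i\<in>{..<n}. \<exists>j<rp. \<exists>l<mm j. \<exists>t\<in>spI i l. Pt j t \<in> A i"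
  proof
    fix i assume "i \<in> {..<n}"
    then have i: "i < n" by simp
    have "0 < val H (nu i) (A i)" using MMS_ge[OF i] ge i wpos by force
    then show "\<exists>j<rp. \<exists>l<mm j. \<exists>t\<in>spI i l. Pt j t \<in> A i" by (rule val_pos[OF i])
  qed
  then obtain J where "\<forall>i\<in>{..<n}. J i < rp \<and> (\<exists>l<mm (J i). \<exists>t\<in>spI i l. Pt (J i) t \<in> A i)"
    by metis
  then obtain Lf where "\<forall>i\<in>{..<n}. J i < rp \<and> Lf i < mm (J i) \<and> (\<exists>t\<in>spI i (Lf i). Pt (J i) t \<in> A i)"
    by metis
  then obtain T where JLT: "\<forall>i\<in>{..<n}. J i < rp \<and> Lf i < mm (J i) \<and> T i \<in> spI i (Lf i) \<and> Pt (J i) (T i) \<in> A i"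
    by metis
  have "\<exists>j<rp. mm j \<le> card {i\<in>{..<n}. J i = j}"
  proof (rule ccontr)
    assume "\<not> ?thesis"
    then have lt: "\<forall>j<rp. card {i\<in>{..<n}. J i = j} \<le> mm j - 1" by force
    have "{..<n} = (\<Union>j\<in>{..<rp}. {i\<in>{..<n}. J i = j})" using JLT by auto
    then have "card {..<n} = card (\<Union>j\<in>{..<rp}. {i\<in>{..<n}. J i = j})" by (rule arg_cong)
    also have "\<dots> = (\<Sum>j<rp. card {i\<in>{..<n}. J i = j})"
      by (rule card_UN_disjoint) auto
    also have "\<dots> \<le> (\<Sum>j<rp. mm j - 1)" using lt by (intro sum_mono) auto
    also have "\<dots> = n - 1" by (rule sum_mm)
    finally show False using n2 by simp
  qed
  then obtain j where j: "j < rp" and cF: "mm j \<le> card {i\<in>{..<n}. J i = j}" by blast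
  define F where "F = {i\<in>{..<n}. J i = j}"
  have finF: "finite F" by (simp add: F_def)
  have c2: "2 \<le> card F" using cF mm[OF j] by (simp add: F_def)
  then obtain p where p: "p \<in> F" by (metis card.empty ex_in_conv not_numeral_le_zero)
  have "card (F - {p}) \<ge> 1" using c2 p finF by simp
  then obtain q where q: "q \<in> F" "q \<noteq> p" by (metis One_nat_def card.empty ex_in_conv Diff_iff insertCI not_one_le_zero)
  have jr: "j < r" using j rp by simp
  have Fi: "i < n \<and> J i = j \<and> Lf i < mm j \<and> T i \<in> spI i (Lf i) \<and> Pt j (T i) \<in> A i" if "i \<in> F" for i
    using that JLT by (auto simp: F_def)
  have rng: "\<forall>i\<in>F. 0 < T i \<and> T i < LL j"
  proof
    fix i assume "i \<in> F"
    then show "0 < T i \<and> T i < LL j" using Fi spI_sub by fastforce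
  qed
  have sepT: "\<forall>i\<in>F. \<forall>i'\<in>F. i \<noteq> i' \<longrightarrow> s \<le> cd (LL j) (T i) (T i')"
  proof (intro ballI impI)
    fix i i' assume ii: "i \<in> F" "i' \<in> F" "i \<noteq> i'"
    have "ereal s \<le> SetDist H (A i) (A i')" using sf Fi ii unfolding sep_family_def by blast
    then have "ereal s \<le> Dist H (Pt j (T i)) (Pt j (T i'))" using Fi ii by (intro lg.SetDist_pt) auto
    also have "\<dots> \<le> ereal (cd (LL j) (T i) (T i'))" using rng ii by (intro lg.Dist_le jr) auto
    finally show "s \<le> cd (LL j) (T i) (T i')" by simp
  qed
  obtain c :: nat where c: "real c * s \<le> (if T p < T q then T q - T p else T q - T p + LL j)"
     "(if T p < T q then T q - T p else T q - T p + LL j) \<le> LL j - (real (mm j) - real c) * s"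
     "(if T p < T q then T q - T p else T q - T p + LL j) < LL j"
    using rigid[OF finF p q LLpos spos rng sepT, of "mm j"] cF by (auto simp: F_def)
  have eq: "(if T p < T q then T q - T p else T q - T p + LL j) = T q - T p + real (if T p < T q then 0 else 1::nat) * LL j"
    by simp
  have pq: "p < n" "q < n" "Lf p < mm j" "Lf q < mm j" "T p \<in> spI p (Lf p)" "T q \<in> spI q (Lf q)"
    using Fi p q by auto
  show False by (rule phase[OF j pq(1,2) q(2)[symmetric] pq(3,4,5,6) c(1,2) eq c(3)])
qed

end


theorem theorem5:
  fixes s :: real and n r :: nat
  assumes "s > 0" and "n \<ge> 2" and "r \<ge> 1"
  shows "\<exists>(G :: (nat, nat) cgraph) (\<mu> :: nat \<Rightarrow> nat \<Rightarrow> real measure).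
           wf_cgraph G \<and> union_of_cycles G r \<and> FvsNum G = r \<and>
           (\<forall>i<n. valuation G (\<mu> i)) \<and>
           (\<forall>(H :: (nat, nat) cgraph) (\<nu> :: nat \<Rightarrow> nat \<Rightarrow> real measure).
              extends_by_trees G H \<and> (\<forall>i<n. zero_extension G H (\<mu> i) (\<nu> i)) \<longrightarrow>
              \<not> (\<exists>A :: nat \<Rightarrow> (nat, nat) cpoint set.
                    sep_family H s n A \<and>
                    (\<forall>i<n. MMS H (\<nu> i) (min (n + r) (2 * n - 1) - 1) s \<le> val H (\<nu> i) (A i))))"
proof -
  interpret C: cons n r s using assms by unfold_locales
  show ?thesis
  proof (rule exI[of _ C.G], rule exI[of _ C.mu], intro conjI allI impI)
    show "wf_cgraph C.G" by (rule C.wf_G)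
    show "union_of_cycles C.G r" by (rule C.union_G)
    show "FvsNum C.G = r" by (rule C.Fvs_G)
    fix i assume "i < n" then show "valuation C.G (C.mu i)" by (rule C.valuation_G)
  next
    fix H :: "(nat,nat) cgraph" and \<nu> :: "nat \<Rightarrow> nat \<Rightarrow> real measure"
    assume "extends_by_trees C.G H \<and> (\<forall>i<n. zero_extension C.G H (C.mu i) (\<nu> i))"
    then interpret E: ext n r s H \<nu> by unfold_locales auto
    have k: "min (n + r) (2 * n - 1) - 1 = E.kk" unfolding E.kk_def C.rp_def by auto
    show "\<not> (\<exists>A :: nat \<Rightarrow> (nat, nat) cpoint set. sep_family H s n A \<and>
                    (\<forall>i<n. MMS H (\<nu> i) (min (n + r) (2 * n - 1) - 1) s \<le> val H (\<nu> i) (A i)))"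
      unfolding k by (rule E.no_alloc)
  qed
qed

end
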